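(* Let $n\ge4$, $x_1,\dots,x_{n-1}>0$, $\gamma,\delta>0$ with $\gamma\ne1\ne\delta$, $x_0=1$, and let $\mathbf{P}$ be the $n\times n$ matrix with entries $p_{ij}=x_{j-1}/x_{i-1}$ except $p_{12}=\delta x_1$, $p_{21}=1/(\delta x_1)$, $p_{13}=\gamma x_2$, $p_{31}=1/(\gamma x_2)$. Let $\mathbf{w}^{EM}$ be the principal right eigenvector of $\mathbf{P}$. Then $\delta<\gamma$ iff $w_2^{EM}/w_3^{EM}>x_2/x_1$; $\delta=\gamma$ iff $w_2^{EM}/w_3^{EM}=x_2/x_1$; and $\delta>\gamma$ iff $w_2^{EM}/w_3^{EM}<x_2/x_1$.
   Context: The principal right eigenvector is the positive (Perron) eigenvector belonging to the largest eigenvalue. *)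

theory Defs
  imports "HOL-Analysis.Analysis"
begin

text \<open>Square matrices of size n are represented as functions nat => nat => real,
  with rows and columns indexed by 1..n (only these entries are relevant).\<close>

definition pert_matrix :: "(nat \<Rightarrow> real) \<Rightarrow> real \<Rightarrow> real \<Rightarrow> nat \<Rightarrow> nat \<Rightarrow> real" where
  "pert_matrix x \<gamma> \<delta> i j =
     (if i = 1 \<and> j = 2 then \<delta> * x 1
      else if i = 2 \<and> j = 1 then 1 / (\<delta> * x 1)
      else if i = 1 \<and> j = 3 then \<gamma> * x 2
      else if i = 3 \<and> j = 1 then 1 / (\<gamma> * x 2)
      else x (j - 1) / x (i - 1))"

definition is_eigenvalue :: "nat \<Rightarrow> (nat \<Rightarrow> nat \<Rightarrow> real) \<Rightarrow> complex \<Rightarrow> bool" where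
  "is_eigenvalue n P \<mu> \<longleftrightarrow>
     (\<exists>v :: nat \<Rightarrow> complex. (\<exists>i\<in>{1..n}. v i \<noteq> 0) \<and>
        (\<forall>i\<in>{1..n}. (\<Sum>j=1..n. complex_of_real (P i j) * v j) = \<mu> * v i))"

definition principal_right_eigenvector :: "nat \<Rightarrow> (nat \<Rightarrow> nat \<Rightarrow> real) \<Rightarrow> (nat \<Rightarrow> real) \<Rightarrow> bool" where
  "principal_right_eigenvector n P w \<longleftrightarrow>
     (\<forall>i\<in>{1..n}. w i > 0) \<and>
     (\<exists>lam::real. (\<forall>i\<in>{1..n}. (\<Sum>j=1..n. P i j * w j) = lam * w i) \<and>
        (\<forall>\<mu>. is_eigenvalue n P \<mu> \<longrightarrow> cmod \<mu> \<le> lam))"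

end

theory Submission
  imports Defs
begin

theorem mainTheorem9:
  fixes n :: nat and x :: "nat \<Rightarrow> real" and \<gamma> \<delta> :: real and w :: "nat \<Rightarrow> real"
  assumes "n \<ge> 4"
    and "\<forall>k\<in>{1..n-1}. x k > 0"
    and "x 0 = 1"
    and "\<gamma> > 0" and "\<delta> > 0" and "\<gamma> \<noteq> 1" and "\<delta> \<noteq> 1"
    and "principal_right_eigenvector n (pert_matrix x \<gamma> \<delta>) w"
  shows "(\<delta> < \<gamma> \<longleftrightarrow> w 2 / w 3 > x 2 / x 1)
       \<and> (\<delta> = \<gamma> \<longleftrightarrow> w 2 / w 3 = x 2 / x 1)
       \<and> (\<delta> > \<gamma> \<longleftrightarrow> w 2 / w 3 < x 2 / x 1)"
proof -
  let ?P = "pert_matrix x \<gamma> \<delta>"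
  have wpos: "\<And>i. i\<in>{1..n} \<Longrightarrow> w i > 0" using assms(8) unfolding principal_right_eigenvector_def by blast
  obtain lam where eq: "\<forall>i\<in>{1..n}. (\<Sum>j=1..n. ?P i j * w j) = lam * w i"
    using assms(8) unfolding principal_right_eigenvector_def by blast
  have x1: "x 1 > 0" and x2: "x 2 > 0" using assms(1,2) by auto
  have w1: "w 1 > 0" and w2: "w 2 > 0" and w3: "w 3 > 0" using wpos assms(1) by auto
  define S where "S = (\<Sum>j=2..n. x (j-1) * w j)"
  have Spos: "S > 0" unfolding S_def
  proof (rule sum_pos)
    show "finite {2..n}" by simp
    show "{2..n} \<noteq> {}" using assms(1) by auto
    fix j assume j: "j \<in> {2..n}"
    then have "j - 1 \<in> {1..n-1}" by auto
    then have "x (j-1) > 0" using assms(2) by blast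
    moreover have "w j > 0" using j wpos by auto
    ultimately show "x (j-1) * w j > 0" by simp
  qed
  have split: "(\<Sum>j=1..n. f j) = f 1 + (\<Sum>j=2..n. f j)" for f :: "nat \<Rightarrow> real"
    using assms(1) sum.atLeast_Suc_atMost[of 1 n f] by (simp add: numeral_2_eq_2)
  have r2: "(\<Sum>j=1..n. ?P 2 j * w j) = lam * w 2" using eq assms(1) by auto
  have r3: "(\<Sum>j=1..n. ?P 3 j * w j) = lam * w 3" using eq assms(1) by auto
  have s2: "x 1 * (\<Sum>j=2..n. ?P 2 j * w j) = S"
    unfolding S_def sum_distrib_left
    by (rule sum.cong) (use x1 in \<open>auto simp: pert_matrix_def\<close>)
  have s3: "x 2 * (\<Sum>j=2..n. ?P 3 j * w j) = S"
    unfolding S_def sum_distrib_left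
    by (rule sum.cong) (use x2 in \<open>auto simp: pert_matrix_def\<close>)
  have p21: "?P 2 1 = 1 / (\<delta> * x 1)" and p31: "?P 3 1 = 1 / (\<gamma> * x 2)"
    by (auto simp: pert_matrix_def)
  have e2: "w 1 / \<delta> + S = lam * x 1 * w 2"
  proof -
    have "?P 2 1 * w 1 + (\<Sum>j=2..n. ?P 2 j * w j) = lam * w 2"
      using r2 split[of "\<lambda>j. ?P 2 j * w j"] by simp
    then have "x 1 * (?P 2 1 * w 1) + x 1 * (\<Sum>j=2..n. ?P 2 j * w j) = x 1 * (lam * w 2)"
      by (metis distrib_left)
    then have "x 1 * (?P 2 1 * w 1) + S = x 1 * (lam * w 2)" using s2 by simp
    then show ?thesis using p21 x1 assms(5) by (simp add: field_simps)
  qed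
  have e3: "w 1 / \<gamma> + S = lam * x 2 * w 3"
  proof -
    have "?P 3 1 * w 1 + (\<Sum>j=2..n. ?P 3 j * w j) = lam * w 3"
      using r3 split[of "\<lambda>j. ?P 3 j * w j"] by simp
    then have "x 2 * (?P 3 1 * w 1) + x 2 * (\<Sum>j=2..n. ?P 3 j * w j) = x 2 * (lam * w 3)"
      by (metis distrib_left)
    then have "x 2 * (?P 3 1 * w 1) + S = x 2 * (lam * w 3)" using s3 by simp
    moreover have "x 2 * (?P 3 1 * w 1) = w 1 / \<gamma>" using p31 x2 by simp
    ultimately show ?thesis by (simp add: algebra_simps)
  qed
  have lampos: "lam > 0"
  proof -
    have "lam * x 1 * w 2 > 0" using e2 Spos w1 assms(5) by (smt (verit) divide_pos_pos)
    then show ?thesis using x1 w2 by (smt (verit) mult_nonneg_nonneg mult_nonpos_nonneg)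
  qed
  have key: "w 1 * (1/\<delta> - 1/\<gamma>) = lam * (x 1 * w 2 - x 2 * w 3)"
    using e2 e3 by (simp add: algebra_simps)
  have cmp: "w 2 / w 3 > x 2 / x 1 \<longleftrightarrow> x 1 * w 2 > x 2 * w 3"
    using x1 w3 by (simp add: divide_less_eq less_divide_eq mult.commute)
  have cmpe: "w 2 / w 3 = x 2 / x 1 \<longleftrightarrow> x 1 * w 2 = x 2 * w 3"
    using x1 w3 by (simp add: field_simps)
  have cmpl: "w 2 / w 3 < x 2 / x 1 \<longleftrightarrow> x 1 * w 2 < x 2 * w 3"
    using x1 w3 by (simp add: divide_less_eq less_divide_eq mult.commute)
  have d1: "\<delta> < \<gamma> \<longleftrightarrow> 1/\<delta> - 1/\<gamma> > 0" using assms(4,5) by (simp add: frac_less2 field_simps)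
  have d2: "\<delta> > \<gamma> \<longleftrightarrow> 1/\<delta> - 1/\<gamma> < 0" using assms(4,5) by (simp add: field_simps)
  have d3: "\<delta> = \<gamma> \<longleftrightarrow> 1/\<delta> - 1/\<gamma> = 0" using assms(4,5) by (auto simp: field_simps)
  have z1: "1/\<delta> - 1/\<gamma> > 0 \<longleftrightarrow> x 1 * w 2 - x 2 * w 3 > 0"
    using key w1 lampos by (metis zero_less_mult_iff not_less_iff_gr_or_eq)
  have z2: "1/\<delta> - 1/\<gamma> < 0 \<longleftrightarrow> x 1 * w 2 - x 2 * w 3 < 0"
    using key w1 lampos by (metis mult_less_0_iff not_less_iff_gr_or_eq)
  have z3: "1/\<delta> - 1/\<gamma> = 0 \<longleftrightarrow> x 1 * w 2 - x 2 * w 3 = 0"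
    using key w1 lampos by auto
  show ?thesis using cmp cmpe cmpl d1 d2 d3 z1 z2 z3 by linarith
qed

end
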